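(* For each integer $r\ge2$ there is a constant $C(r)$ such that the following holds. Let $K\ge1$ and $N\le r(K+1)$ be positive integers, let $y:=r-N/(K+1)\ge0$, and let $\iota\ge1$ be an integer. Then the number of sequences $\mathbf j=(j_1,\dots,j_r)$ of distinct elements of $\mathbb Z/N\mathbb Z$ with $M(r+1,\mathbf j)=\iota$ is at most $C(r)\,N\,(yK+\iota)^{r-2}$.
   Context: For a sequence $\mathbf j=(j_1,\dots,j_r)$ of distinct elements of $\mathbb Z/N\mathbb Z\cong\{1,\dots,N\}$ and $1\le s\le r+1$, let $\mathrm{missed}(s,\mathbf j):=\{i\in\{1,\dots,N\}: i-j_t\notin\{0,1,\dots,K\}\ (\mathrm{mod}\ N)\text{ for all }t<s\}$ and $M(s,\mathbf j):=|\mathrm{missed}(s,\mathbf j)|$. *)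

theory Defs
  imports Complex_Main
begin

text \<open>Elements of Z/NZ are represented by {1..N}; a sequence j = (j_1,...,j_r) is a list
  js with js ! (t-1) = j_t.  Congruence mod N is computed via int mod.\<close>

definition missed :: "nat \<Rightarrow> nat \<Rightarrow> nat \<Rightarrow> nat list \<Rightarrow> nat set" where
  "missed N K s js = {i \<in> {1..N}. \<forall>t\<in>{1..<s}.
      (int i - int (js ! (t - 1))) mod int N \<notin> {0..int K}}"

definition M :: "nat \<Rightarrow> nat \<Rightarrow> nat \<Rightarrow> nat list \<Rightarrow> nat" where
  "M N K s js = card (missed N K s js)"

end

theory Submission
  imports Defs "HOL-Library.FuncSet"
begin


lemma sub_mod: "0 < (N::int) \<Longrightarrow> 0 \<le> x mod N - y mod N \<Longrightarrow> (x - y) mod N = x mod N - y mod N"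
proof -
  assume a: "0 < N" "0 \<le> x mod N - y mod N"
  have "(x - y) mod N = (x mod N - y mod N) mod N" by (simp add: mod_diff_eq)
  also have "\<dots> = x mod N - y mod N"
    using a by (smt (verit) Euclidean_Rings.pos_mod_bound Euclidean_Rings.pos_mod_sign mod_pos_pos_trivial)
  finally show ?thesis .
qed

lemma add_mod: "0 < (N::int) \<Longrightarrow> x mod N + y mod N < N \<Longrightarrow> (x + y) mod N = x mod N + y mod N"
proof -
  assume a: "0 < N" "x mod N + y mod N < N"
  have "(x + y) mod N = (x mod N + y mod N) mod N" by (simp add: mod_add_eq)
  also have "\<dots> = x mod N + y mod N"
    using a by (simp add: mod_pos_pos_trivial)
  finally show ?thesis .
qed

lemma mod_cancel_left: "(i - a) mod (N::int) = (i - b) mod N \<Longrightarrow> a mod N = b mod N"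
proof -
  assume h: "(i - a) mod (N::int) = (i - b) mod N"
  have "N dvd (i - a) - (i - b)" using h by (simp only: mod_eq_dvd_iff)
  then have "N dvd -(a - b)" by (simp add: algebra_simps)
  then have "N dvd a - b" by (simp only: dvd_minus_iff)
  then show ?thesis by (simp only: mod_eq_dvd_iff)
qed

lemma eq_range: "1 \<le> (x::int) \<Longrightarrow> x \<le> N \<Longrightarrow> 1 \<le> y \<Longrightarrow> y \<le> N \<Longrightarrow> x mod N = y mod N \<Longrightarrow> x = y"
proof -
  assume a: "1 \<le> x" "x \<le> N" "1 \<le> y" "y \<le> N" "x mod N = y mod N"
  then have "N dvd x - y" by (simp add: mod_eq_dvd_iff)
  then obtain k where k: "x - y = N * k" by auto
  have "\<bar>x - y\<bar> < N" using a by auto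
  then have "k = 0" using k a
    by (smt (verit, ccfv_SIG) mult_less_cancel_left2 mult_minus_right)
  then show ?thesis using k by simp
qed

lemma bij_off: "0 < (N::int) \<Longrightarrow> bij_betw (\<lambda>i. (i - c) mod N) {1..N} {0..<N}"
proof -
  assume N: "0 < N"
  have inj: "inj_on (\<lambda>i. (i - c) mod N) {1..N}"
  proof (rule inj_onI)
    fix x y assume "x \<in> {1..N}" "y \<in> {1..N}" "(x - c) mod N = (y - c) mod N"
    then show "x = y"
      by (metis atLeastAtMost_iff diff_add_cancel eq_range mod_add_cong)
  qed
  have sub: "(\<lambda>i. (i - c) mod N) ` {1..N} \<subseteq> {0..<N}" using N by auto
  have "card ((\<lambda>i. (i - c) mod N) ` {1..N}) = card {0..<N}"
    using card_image[OF inj] by simp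
  then have "(\<lambda>i. (i - c) mod N) ` {1..N} = {0..<N}"
    using card_subset_eq[OF _ sub] by simp
  then show ?thesis using inj by (simp add: bij_betw_def)
qed

lemma card_off: "0 < (N::int) \<Longrightarrow> card {i\<in>{1..N}. Q ((i - c) mod N)} = card {v\<in>{0..<N}. Q v}"
proof -
  assume N: "0 < N"
  let ?f = "\<lambda>i. (i - c) mod N"
  have b: "bij_betw ?f {1..N} {0..<N}" using bij_off[OF N] .
  have "?f ` {i\<in>{1..N}. Q (?f i)} = {v\<in>{0..<N}. Q v}"
  proof
    show "?f ` {i\<in>{1..N}. Q (?f i)} \<subseteq> {v\<in>{0..<N}. Q v}" using N by auto
    show "{v\<in>{0..<N}. Q v} \<subseteq> ?f ` {i\<in>{1..N}. Q (?f i)}"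
    proof
      fix v assume v: "v \<in> {v\<in>{0..<N}. Q v}"
      then obtain i where "i \<in> {1..N}" "?f i = v" using b unfolding bij_betw_def
        by (metis (no_types, lifting) imageE mem_Collect_eq)
      then show "v \<in> ?f ` {i\<in>{1..N}. Q (?f i)}" using v by (intro image_eqI[of v ?f i]) auto
    qed
  qed
  moreover have "inj_on ?f {i\<in>{1..N}. Q (?f i)}"
    using b unfolding bij_betw_def by (rule conjE) (erule inj_on_subset, blast)
  ultimately show ?thesis using card_image by fastforce
qed


locale gaps =
  fixes N :: int and T :: "nat set" and p :: "nat \<Rightarrow> int"
  assumes Npos: "0 < N" and finT: "finite T" and neT: "T \<noteq> {}"
    and injp: "inj_on (\<lambda>t. p t mod N) T"
    and two: "\<And>t. t \<in> T \<Longrightarrow> \<exists>s\<in>T. s \<noteq> t"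
begin

definition g where "g t = Min ((\<lambda>s. (p s - p t) mod N) ` (T - {t}))"
definition blk where "blk t = {i\<in>{1..N}. (i - p t) mod N < g t}"

lemma g_ex: assumes "t \<in> T" shows "\<exists>s\<in>T. s \<noteq> t \<and> g t = (p s - p t) mod N"
proof -
  have fin: "finite ((\<lambda>s. (p s - p t) mod N) ` (T - {t}))" using finT by simp
  have ne: "(\<lambda>s. (p s - p t) mod N) ` (T - {t}) \<noteq> {}" using two[OF assms] by auto
  show ?thesis using Min_in[OF fin ne] unfolding g_def by auto
qed

lemma g_le: "t \<in> T \<Longrightarrow> s \<in> T \<Longrightarrow> s \<noteq> t \<Longrightarrow> g t \<le> (p s - p t) mod N"
  unfolding g_def using finT by (intro Min_le) auto

lemma modneq: "s \<in> T \<Longrightarrow> t \<in> T \<Longrightarrow> s \<noteq> t \<Longrightarrow> (p s - p t) mod N \<noteq> 0"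
proof
  assume a: "s \<in> T" "t \<in> T" "s \<noteq> t" "(p s - p t) mod N = 0"
  then have "p s mod N = p t mod N" by (simp add: mod_eq_dvd_iff dvd_eq_mod_eq_0)
  then show False using injp a unfolding inj_on_def by blast
qed

lemma g_pos: "t \<in> T \<Longrightarrow> 0 < g t"
proof -
  assume t: "t \<in> T"
  obtain s where s: "s \<in> T" "s \<noteq> t" "g t = (p s - p t) mod N" using g_ex[OF t] by blast
  have "0 \<le> (p s - p t) mod N" using Npos by simp
  then show ?thesis using modneq[OF s(1) t s(2)] s(3) by simp
qed

lemma g_lt: "t \<in> T \<Longrightarrow> g t < N"
proof -
  assume t: "t \<in> T"
  obtain s where s: "s \<in> T" "s \<noteq> t" "g t = (p s - p t) mod N" using g_ex[OF t] by blast
  then show ?thesis using Npos by simp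
qed

lemma blk_iff: assumes t: "t \<in> T"
  shows "((i - p t) mod N < g t) = (\<forall>s\<in>T. (i - p t) mod N \<le> (i - p s) mod N)"
proof
  assume lt: "(i - p t) mod N < g t"
  show "\<forall>s\<in>T. (i - p t) mod N \<le> (i - p s) mod N"
  proof (rule ccontr)
    assume "\<not> (\<forall>s\<in>T. (i - p t) mod N \<le> (i - p s) mod N)"
    then obtain s where s: "s \<in> T" "(i - p s) mod N < (i - p t) mod N" by force
    then have st: "s \<noteq> t" by auto
    have e: "p s - p t = (i - p t) - (i - p s)" by simp
    have "(p s - p t) mod N = (i - p t) mod N - (i - p s) mod N"
      unfolding e using s(2) Npos by (intro sub_mod) auto
    moreover have "g t \<le> (p s - p t) mod N" using g_le[OF t s(1) st] .
    moreover have "0 \<le> (i - p s) mod N" using Npos by simp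
    ultimately show False using lt by linarith
  qed
next
  assume all: "\<forall>s\<in>T. (i - p t) mod N \<le> (i - p s) mod N"
  show "(i - p t) mod N < g t"
  proof (rule ccontr)
    assume ge: "\<not> (i - p t) mod N < g t"
    obtain s where s: "s \<in> T" "s \<noteq> t" "g t = (p s - p t) mod N" using g_ex[OF t] by blast
    have e: "i - p s = (i - p t) - (p s - p t)" by simp
    have "(i - p s) mod N = (i - p t) mod N - (p s - p t) mod N"
      unfolding e using s(3) ge Npos by (intro sub_mod) auto
    then show False using all s(1) s(3) g_pos[OF t] by fastforce
  qed
qed

lemma owner: "\<exists>t\<in>T. \<forall>s\<in>T. (i - p t) mod N \<le> (i - p s) mod N"
proof -
  have fin: "finite ((\<lambda>t. (i - p t) mod N) ` T)" using finT by simp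
  have ne: "(\<lambda>t. (i - p t) mod N) ` T \<noteq> {}" using neT by simp
  obtain t where t: "t \<in> T" "(i - p t) mod N = Min ((\<lambda>t. (i - p t) mod N) ` T)"
    using Min_in[OF fin ne] by auto
  have "\<forall>s\<in>T. (i - p t) mod N \<le> (i - p s) mod N" using t(2) fin by auto
  then show ?thesis using t(1) by blast
qed

lemma blk_disj: "s \<in> T \<Longrightarrow> t \<in> T \<Longrightarrow> s \<noteq> t \<Longrightarrow> blk s \<inter> blk t = {}"
proof (rule ccontr)
  assume a: "s \<in> T" "t \<in> T" "s \<noteq> t" "blk s \<inter> blk t \<noteq> {}"
  then obtain i where i: "i \<in> blk s" "i \<in> blk t" by blast
  have "(i - p s) mod N \<le> (i - p t) mod N" using i(1) blk_iff[OF a(1)] a(2) unfolding blk_def by auto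
  moreover have "(i - p t) mod N \<le> (i - p s) mod N" using i(2) blk_iff[OF a(2)] a(1) unfolding blk_def by auto
  ultimately have "(i - p s) mod N = (i - p t) mod N" by simp
  then have "p s mod N = p t mod N" by (rule mod_cancel_left)
  then show False using injp a unfolding inj_on_def by blast
qed

lemma blk_cover: "i \<in> {1..N} \<Longrightarrow> \<exists>t\<in>T. i \<in> blk t"
  using owner[of i] blk_iff unfolding blk_def by blast

lemma card_blk: "t \<in> T \<Longrightarrow> card (blk t) = nat (g t)"
proof -
  assume t: "t \<in> T"
  have "card (blk t) = card {v\<in>{0..<N}. v < g t}" unfolding blk_def using card_off[OF Npos] .
  also have "{v\<in>{0..<N}. v < g t} = {0..<g t}" using g_lt[OF t] by auto
  finally show ?thesis by simp
qed

lemma card_union_blk: assumes "S \<subseteq> T"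
  shows "card (\<Union>t\<in>S. blk t) = (\<Sum>t\<in>S. nat (g t))"
proof -
  have "finite S" using finT assms finite_subset by blast
  moreover have "\<forall>t\<in>S. finite (blk t)" unfolding blk_def by (auto intro: finite_subset[of _ "{1..N}"])
  moreover have "\<forall>s\<in>S. \<forall>t\<in>S. s \<noteq> t \<longrightarrow> blk s \<inter> blk t = {}" using blk_disj assms by blast
  ultimately have "card (\<Union>t\<in>S. blk t) = (\<Sum>t\<in>S. card (blk t))" by (rule card_UN_disjoint)
  also have "\<dots> = (\<Sum>t\<in>S. nat (g t))" using card_blk assms by (intro sum.cong) auto
  finally show ?thesis .
qed

lemma sum_nat_g: assumes "S \<subseteq> T" shows "int (\<Sum>t\<in>S. nat (g t)) = (\<Sum>t\<in>S. g t)"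
proof -
  have "int (\<Sum>t\<in>S. nat (g t)) = (\<Sum>t\<in>S. int (nat (g t)))" by (simp add: of_nat_sum)
  also have "\<dots> = (\<Sum>t\<in>S. g t)"
  proof (rule sum.cong)
    fix t assume "t \<in> S"
    then have "0 < g t" using g_pos assms by blast
    then show "int (nat (g t)) = g t" by simp
  qed simp
  finally show ?thesis .
qed

lemma sum_g: "(\<Sum>t\<in>T. g t) = N"
proof -
  have "(\<Union>t\<in>T. blk t) = {1..N}" using blk_cover unfolding blk_def by blast
  then have "card {1..N} = (\<Sum>t\<in>T. nat (g t))" using card_union_blk[of T] by simp
  then have "int (card {1..N}) = (\<Sum>t\<in>T. g t)" using sum_nat_g[of T] by simp
  then show ?thesis using Npos by simp
qed


lemma card_miss: assumes K: "0 \<le> K"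
  shows "int (card {i\<in>{1..N}. \<forall>t\<in>T. K < (i - p t) mod N}) = (\<Sum>t\<in>T. max (g t - (K+1)) 0)"
proof -
  define Mi where "Mi = {i\<in>{1..N}. \<forall>t\<in>T. K < (i - p t) mod N}"
  have cov: "Mi = (\<Union>t\<in>T. Mi \<inter> blk t)" using blk_cover unfolding Mi_def by blast
  have "card (\<Union>t\<in>T. Mi \<inter> blk t) = (\<Sum>t\<in>T. card (Mi \<inter> blk t))"
  proof (rule card_UN_disjoint)
    show "finite T" using finT .
    show "\<forall>t\<in>T. finite (Mi \<inter> blk t)" unfolding Mi_def by (auto intro: finite_subset[of _ "{1..N}"])
    show "\<forall>s\<in>T. \<forall>t\<in>T. s \<noteq> t \<longrightarrow> (Mi \<inter> blk s) \<inter> (Mi \<inter> blk t) = {}" using blk_disj by blast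
  qed
  then have c1: "card Mi = (\<Sum>t\<in>T. card (Mi \<inter> blk t))" using cov by simp
  have c2: "card (Mi \<inter> blk t) = nat (g t - (K+1))" if t: "t \<in> T" for t
  proof -
    have "Mi \<inter> blk t = {i\<in>{1..N}. K < (i - p t) mod N \<and> (i - p t) mod N < g t}"
    proof
      show "Mi \<inter> blk t \<subseteq> {i\<in>{1..N}. K < (i - p t) mod N \<and> (i - p t) mod N < g t}"
        unfolding Mi_def blk_def using t by auto
      show "{i\<in>{1..N}. K < (i - p t) mod N \<and> (i - p t) mod N < g t} \<subseteq> Mi \<inter> blk t"
      proof
        fix i assume i: "i \<in> {i\<in>{1..N}. K < (i - p t) mod N \<and> (i - p t) mod N < g t}"
        then have "\<forall>s\<in>T. (i - p t) mod N \<le> (i - p s) mod N" using blk_iff[OF t] by blast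
        then have "\<forall>s\<in>T. K < (i - p s) mod N" using i by force
        then show "i \<in> Mi \<inter> blk t" using i unfolding Mi_def blk_def by blast
      qed
    qed
    then have "card (Mi \<inter> blk t) = card {v\<in>{0..<N}. K < v \<and> v < g t}"
      using card_off[OF Npos, of "\<lambda>v. K < v \<and> v < g t" "p t"] by simp
    also have "{v\<in>{0..<N}. K < v \<and> v < g t} = {K+1..<g t}" using g_lt[OF t] K by auto
    finally show ?thesis by simp
  qed
  have "int (card Mi) = (\<Sum>t\<in>T. int (nat (g t - (K+1))))" using c1 c2 by (simp add: of_nat_sum)
  also have "\<dots> = (\<Sum>t\<in>T. max (g t - (K+1)) 0)" by (rule sum.cong) auto
  finally show ?thesis unfolding Mi_def .
qed

lemma offs: assumes t0: "t0 \<in> T" and t: "t \<in> T"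
  shows "(p t - p t0) mod N = (\<Sum>s\<in>{s\<in>T. (p s - p t0) mod N < (p t - p t0) mod N}. g s)"
proof -
  define a where "a s = (p s - p t0) mod N" for s
  define S where "S = {s\<in>T. a s < a t}"
  have aN: "a s < N" "0 \<le> a s" for s unfolding a_def using Npos by auto
  have eq: "{i\<in>{1..N}. (i - p t0) mod N < a t} = (\<Union>s\<in>S. blk s)"
  proof
    show "{i\<in>{1..N}. (i - p t0) mod N < a t} \<subseteq> (\<Union>s\<in>S. blk s)"
    proof
      fix i assume i: "i \<in> {i\<in>{1..N}. (i - p t0) mod N < a t}"
      obtain s where s: "s \<in> T" "i \<in> blk s" using blk_cover i by blast
      have le: "(i - p s) mod N \<le> (i - p t0) mod N" using s blk_iff[OF s(1)] t0 unfolding blk_def by auto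
      have e: "p s - p t0 = (i - p t0) - (i - p s)" by simp
      have "a s = (i - p t0) mod N - (i - p s) mod N"
        unfolding a_def e using le Npos by (intro sub_mod) auto
      moreover have "0 \<le> (i - p s) mod N" using Npos by simp
      moreover have "(i - p t0) mod N < a t" using i by simp
      ultimately have "a s < a t" by linarith
      then show "i \<in> (\<Union>s\<in>S. blk s)" using s unfolding S_def by blast
    qed
    show "(\<Union>s\<in>S. blk s) \<subseteq> {i\<in>{1..N}. (i - p t0) mod N < a t}"
    proof
      fix i assume "i \<in> (\<Union>s\<in>S. blk s)"
      then obtain s where s: "s \<in> T" "a s < a t" "i \<in> blk s" unfolding S_def by blast
      have st: "s \<noteq> t" using s by auto
      have e1: "p t - p s = (p t - p t0) - (p s - p t0)" by simp
      have d: "(p t - p s) mod N = a t - a s"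
        unfolding e1 a_def using s(2) Npos unfolding a_def by (intro sub_mod) auto
      have gl: "g s \<le> a t - a s" using g_le[OF s(1) t st[symmetric]] d by simp
      have o: "(i - p s) mod N < g s" "i \<in> {1..N}" using s(3) unfolding blk_def by auto
      have e2: "i - p t0 = (i - p s) + (p s - p t0)" by simp
      have "(i - p s) mod N + a s < N" using o gl aN[of t] by linarith
      then have "(i - p t0) mod N = (i - p s) mod N + a s"
        unfolding e2 a_def using Npos by (intro add_mod) auto
      then show "i \<in> {i\<in>{1..N}. (i - p t0) mod N < a t}" using o gl by auto
    qed
  qed
  have "card {i\<in>{1..N}. (i - p t0) mod N < a t} = card {v\<in>{0..<N}. v < a t}"
    using card_off[OF Npos] .
  also have "{v\<in>{0..<N}. v < a t} = {0..<a t}" using aN[of t] by auto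
  finally have "nat (a t) = card (\<Union>s\<in>S. blk s)" using eq by simp
  also have "\<dots> = (\<Sum>s\<in>S. nat (g s))" using card_union_blk[of S] unfolding S_def by auto
  finally have "int (nat (a t)) = (\<Sum>s\<in>S. g s)" using sum_nat_g[of S] unfolding S_def by auto
  then show ?thesis using aN[of t] unfolding S_def a_def by simp
qed

end



lemma sum_two: "finite T \<Longrightarrow> a \<in> T \<Longrightarrow> b \<in> T \<Longrightarrow> a \<noteq> b \<Longrightarrow>
  sum f T = f a + f b + sum f (T - {a,b})"
proof -
  assume h: "finite T" "a \<in> T" "b \<in> T" "a \<noteq> b"
  have "sum f T = f a + sum f (T - {a})" using h by (simp add: sum.remove)
  also have "sum f (T - {a}) = f b + sum f (T - {a} - {b})" using h by (intro sum.remove) auto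
  also have "T - {a} - {b} = T - {a,b}" by auto
  finally show ?thesis by (simp add: add.assoc)
qed

lemma card_W:
  fixes r \<iota> :: nat and c :: int
  assumes c: "c \<le> 0" and io: "1 \<le> \<iota>"
  shows "finite {d :: nat \<Rightarrow> int. d \<in> extensional {0..<r} \<and> (\<Sum>t\<in>{0..<r}. max (d t) 0) = int \<iota>
            \<and> (\<Sum>t\<in>{0..<r}. d t) = c} \<and>
         card {d :: nat \<Rightarrow> int. d \<in> extensional {0..<r} \<and> (\<Sum>t\<in>{0..<r}. max (d t) 0) = int \<iota>
            \<and> (\<Sum>t\<in>{0..<r}. d t) = c}
         \<le> r * r * nat (2 * int \<iota> - c + 1) ^ (r - 2)"
proof -
  define T where "T = {0..<r}"
  define W where "W = {d :: nat \<Rightarrow> int. d \<in> extensional T \<and> (\<Sum>t\<in>T. max (d t) 0) = int \<iota>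
            \<and> (\<Sum>t\<in>T. d t) = c}"
  define E where "E = int \<iota> - c"
  define L where "L = nat (2 * int \<iota> - c + 1)"
  have finT: "finite T" unfolding T_def by simp
  have negsum: "(\<Sum>t\<in>T. max (- d t) 0) = E" if "d \<in> W" for d
  proof -
    have "(\<Sum>t\<in>T. max (- d t) 0) = (\<Sum>t\<in>T. max (d t) 0 - d t)" by (rule sum.cong) auto
    also have "\<dots> = (\<Sum>t\<in>T. max (d t) 0) - (\<Sum>t\<in>T. d t)" by (simp add: sum_subtractf)
    finally show ?thesis using that unfolding W_def E_def by simp
  qed
  have range: "d t \<in> {-E..int \<iota>}" if "d \<in> W" "t \<in> T" for d t
  proof -
    have "max (d t) 0 \<le> (\<Sum>t\<in>T. max (d t) 0)"
      using that finT by (intro member_le_sum) auto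
    moreover have "max (- d t) 0 \<le> (\<Sum>t\<in>T. max (- d t) 0)"
      using that finT by (intro member_le_sum) auto
    ultimately show ?thesis using negsum[OF that(1)] that(1) unfolding W_def by auto
  qed
  have exa: "\<exists>a. a \<in> T \<and> 0 < d a" if "d \<in> W" for d
  proof (rule ccontr)
    assume "\<not> (\<exists>a. a \<in> T \<and> 0 < d a)"
    then have "(\<Sum>t\<in>T. max (d t) 0) = 0" by (intro sum.neutral) auto
    then show False using that io unfolding W_def by simp
  qed
  have exb: "\<exists>b. b \<in> T \<and> d b < 0" if "d \<in> W" for d
  proof (rule ccontr)
    assume "\<not> (\<exists>b. b \<in> T \<and> d b < 0)"
    then have "(\<Sum>t\<in>T. max (- d t) 0) = 0" by (intro sum.neutral) auto
    then show False using negsum[OF that] io c unfolding E_def by simp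
  qed
  define ta where "ta d = (SOME a. a \<in> T \<and> 0 < d a)" for d :: "nat \<Rightarrow> int"
  define tb where "tb d = (SOME b. b \<in> T \<and> d b < 0)" for d :: "nat \<Rightarrow> int"
  have ta: "ta d \<in> T \<and> 0 < d (ta d)" if "d \<in> W" for d
    unfolding ta_def using someI_ex[OF exa[OF that]] .
  have tb: "tb d \<in> T \<and> d (tb d) < 0" if "d \<in> W" for d
    unfolding tb_def using someI_ex[OF exb[OF that]] .
  define h where "h d = ((ta d, tb d), restrict d (T - {ta d, tb d}))" for d
  define P where "P = {(a,b). a \<in> T \<and> b \<in> T \<and> a \<noteq> b}"
  define B where "B = (SIGMA ab:P. PiE (T - {fst ab, snd ab}) (\<lambda>_. {-E..int \<iota>}))"
  have inj: "inj_on h W"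
  proof (rule inj_onI)
    fix d d' assume d: "d \<in> W" and d': "d' \<in> W" and hh: "h d = h d'"
    define a where "a = ta d"
    define b where "b = tb d"
    have ab: "ta d' = a" "tb d' = b" using hh unfolding h_def a_def b_def by auto
    have r: "restrict d (T - {a, b}) = restrict d' (T - {a, b})" using hh unfolding h_def a_def b_def
      by (metis ab prod.inject)
    then have rest: "\<And>t. t \<in> T - {a,b} \<Longrightarrow> d t = d' t" by (metis restrict_apply')
    have aT: "a \<in> T" "0 < d a" "0 < d' a" using ta[OF d] ta[OF d'] ab unfolding a_def by auto
    have bT: "b \<in> T" "d b < 0" "d' b < 0" using tb[OF d] tb[OF d'] ab unfolding b_def by auto
    have abne: "a \<noteq> b" using aT bT by auto
    have R1: "(\<Sum>t\<in>T - {a,b}. max (d t) 0) = (\<Sum>t\<in>T - {a,b}. max (d' t) 0)"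
      using rest by (intro sum.cong) auto
    have R2: "(\<Sum>t\<in>T - {a,b}. d t) = (\<Sum>t\<in>T - {a,b}. d' t)"
      using rest by (intro sum.cong) auto
    have s1: "(\<Sum>t\<in>T. max (d t) 0) = d a + 0 + (\<Sum>t\<in>T - {a,b}. max (d t) 0)"
      using sum_two[OF finT aT(1) bT(1) abne, of "\<lambda>t. max (d t) 0"] aT bT by simp
    have s1': "(\<Sum>t\<in>T. max (d' t) 0) = d' a + 0 + (\<Sum>t\<in>T - {a,b}. max (d' t) 0)"
      using sum_two[OF finT aT(1) bT(1) abne, of "\<lambda>t. max (d' t) 0"] aT bT by simp
    have eqa: "d a = d' a" using s1 s1' R1 d d' unfolding W_def by simp
    have s2: "(\<Sum>t\<in>T. d t) = d a + d b + (\<Sum>t\<in>T - {a,b}. d t)"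
      using sum_two[OF finT aT(1) bT(1) abne] by simp
    have s2': "(\<Sum>t\<in>T. d' t) = d' a + d' b + (\<Sum>t\<in>T - {a,b}. d' t)"
      using sum_two[OF finT aT(1) bT(1) abne] by simp
    have eqb: "d b = d' b" using s2 s2' R2 eqa d d' unfolding W_def by simp
    show "d = d'"
    proof (rule extensionalityI[of _ T])
      show "d \<in> extensional T" "d' \<in> extensional T" using d d' unfolding W_def by auto
      fix t assume "t \<in> T"
      then show "d t = d' t" using rest eqa eqb by (cases "t = a \<or> t = b") auto
    qed
  qed
  have sub: "h ` W \<subseteq> B"
  proof
    fix x assume "x \<in> h ` W"
    then obtain d where d: "d \<in> W" "x = h d" by blast
    have "(ta d, tb d) \<in> P" using ta[OF d(1)] tb[OF d(1)] unfolding P_def by auto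
    moreover have "restrict d (T - {ta d, tb d}) \<in> PiE (T - {ta d, tb d}) (\<lambda>_. {-E..int \<iota>})"
      using range[OF d(1)] by auto
    ultimately show "x \<in> B" unfolding B_def d(2) h_def by auto
  qed
  have finP: "finite P"
  proof (rule finite_subset)
    show "P \<subseteq> T \<times> T" unfolding P_def by auto
    show "finite (T \<times> T)" using finT by simp
  qed
  have cardP: "card P \<le> r * r"
  proof -
    have "card P \<le> card (T \<times> T)" unfolding P_def using finT by (intro card_mono) auto
    then show ?thesis unfolding T_def by (simp add: card_cartesian_product)
  qed
  have cardI: "card {-E..int \<iota>} = L" unfolding L_def E_def by simp
  have cB: "card (PiE (T - {fst ab, snd ab}) (\<lambda>_. {-E..int \<iota>})) = L ^ (r - 2)" if "ab \<in> P" for ab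
  proof -
    have "card (T - {fst ab, snd ab}) = r - 2"
      using that finT unfolding P_def T_def by (auto simp: card_Diff_subset)
    then show ?thesis using finT by (simp add: card_PiE L_def E_def)
  qed
  have finB: "finite B" unfolding B_def using finP finT
    by (intro finite_SigmaI finite_PiE) auto
  have "card W \<le> card B" using card_inj_on_le[OF inj sub finB] .
  also have "card B = (\<Sum>ab\<in>P. L ^ (r - 2))" unfolding B_def
    using finP finT cB by (subst card_SigmaI) (auto intro!: finite_PiE sum.cong)
  also have "\<dots> = card P * L ^ (r - 2)" by simp
  also have "\<dots> \<le> r * r * L ^ (r - 2)" using cardP by simp
  finally have "card W \<le> r * r * L ^ (r - 2)" .
  moreover have "finite W" using finite_imageD[OF finite_subset[OF sub finB] inj] .
  ultimately show ?thesis unfolding W_def T_def L_def by blast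
qed


lemma mod_cancel_right: "(a - c) mod (N::int) = (b - c) mod N \<Longrightarrow> a mod N = b mod N"
  by (metis diff_add_cancel mod_add_cong)

theorem lemma5p1:
  fixes r :: nat
  assumes "r \<ge> 2"
  shows "\<exists>C::real. \<forall>K N \<iota> :: nat.
    K \<ge> 1 \<longrightarrow> N \<ge> 1 \<longrightarrow> N \<le> r * (K + 1) \<longrightarrow> \<iota> \<ge> 1 \<longrightarrow>
    real (card {js :: nat list. length js = r \<and> distinct js \<and> set js \<subseteq> {1..N}
                  \<and> M N K (r + 1) js = \<iota>})
      \<le> C * real N * ((real r - real N / real (K + 1)) * real K + real \<iota>) ^ (r - 2)"
proof -
  have r2: "2 \<le> r" using assms .
  define C :: real where "C = real (2^(r*r) * (r*r) * 3^(r-2))"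
  show ?thesis
  proof (rule exI[of _ C], intro allI impI)
    fix K N \<iota> :: nat
    assume K1: "1 \<le> K" and N1: "1 \<le> N" and NrK: "N \<le> r * (K + 1)" and io: "1 \<le> \<iota>"
    define A where "A = {js :: nat list. length js = r \<and> distinct js \<and> set js \<subseteq> {1..N}
                  \<and> M N K (r + 1) js = \<iota>}"
    define Wc where "Wc = {d :: nat \<Rightarrow> int. d \<in> extensional {0..<r} \<and> (\<Sum>t\<in>{0..<r}. max (d t) 0) = int \<iota>
            \<and> (\<Sum>t\<in>{0..<r}. d t) = int N - int r * (int K + 1)}"
    define gg where "gg js = gaps.g (int N) {0..<r} (\<lambda>t. int (js!t))" for js :: "nat list"
    define aa where "aa js t = (int (js!t) - int (js!0)) mod int N" for js :: "nat list" and t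
    define F where "F js = (js!0, {(s,t). s<r \<and> t<r \<and> aa js s < aa js t},
                            restrict (\<lambda>t. gg js t - int (K+1)) {0..<r})" for js
    have rng: "1 \<le> js!t \<and> js!t \<le> N" if "js \<in> A" "t < r" for js t
    proof -
      have "js!t \<in> set js" using that unfolding A_def by auto
      moreover have "set js \<subseteq> {1..N}" using that unfolding A_def by auto
      ultimately have "js!t \<in> {1..N}" by blast
      then show ?thesis by simp
    qed
    have loc: "gaps (int N) {0..<r} (\<lambda>t. int (js!t))" if js: "js \<in> A" for js
    proof
      show "0 < int N" using N1 by simp
      show "finite {0..<r}" by simp
      show "{0..<r} \<noteq> {}" using r2 by simp
      show "inj_on (\<lambda>t. int (js ! t) mod int N) {0..<r}"
      proof (rule inj_onI)
        fix s t assume st: "s \<in> {0..<r}" "t \<in> {0..<r}" "int (js ! s) mod int N = int (js ! t) mod int N"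
        have "int (js!s) = int (js!t)"
          using eq_range[OF _ _ _ _ st(3)] rng[OF js, of s] rng[OF js, of t] st by auto
        then have "js!s = js!t" by simp
        then show "s = t" using js st unfolding A_def by (simp add: nth_eq_iff_index_eq)
      qed
      fix t assume "t \<in> {0..<r}"
      then show "\<exists>s\<in>{0..<r}. s \<noteq> t" using r2
        by (intro bexI[of _ "if t = 0 then 1 else 0"]) auto
    qed
    have missc: "int (card {i\<in>{1..int N}. \<forall>t\<in>{0..<r}. int K < (i - int (js!t)) mod int N}) = int \<iota>"
      if js: "js \<in> A" for js
    proof -
      have "int ` missed N K (r+1) js = {i\<in>{1..int N}. \<forall>t\<in>{0..<r}. int K < (i - int (js!t)) mod int N}"
      proof
        show "int ` missed N K (r+1) js \<subseteq> {i\<in>{1..int N}. \<forall>t\<in>{0..<r}. int K < (i - int (js!t)) mod int N}"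
        proof
          fix x assume "x \<in> int ` missed N K (r+1) js"
          then obtain i where i: "x = int i" "i \<in> {1..N}"
            "\<forall>t\<in>{1..<r+1}. (int i - int (js ! (t - 1))) mod int N \<notin> {0..int K}"
            unfolding missed_def by blast
          have "int K < (x - int (js!t)) mod int N" if "t \<in> {0..<r}" for t
          proof -
            have "Suc t \<in> {1..<r+1}" using that by auto
            then have "(int i - int (js ! (Suc t - 1))) mod int N \<notin> {0..int K}" using i(3) by blast
            moreover have "0 \<le> (int i - int (js ! t)) mod int N" using N1 by simp
            ultimately show ?thesis using i(1) by auto
          qed
          then show "x \<in> {i\<in>{1..int N}. \<forall>t\<in>{0..<r}. int K < (i - int (js!t)) mod int N}"
            using i by auto
        qed
        show "{i\<in>{1..int N}. \<forall>t\<in>{0..<r}. int K < (i - int (js!t)) mod int N} \<subseteq> int ` missed N K (r+1) js"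
        proof
          fix x assume x: "x \<in> {i\<in>{1..int N}. \<forall>t\<in>{0..<r}. int K < (i - int (js!t)) mod int N}"
          have "nat x \<in> missed N K (r+1) js"
            unfolding missed_def
          proof (intro CollectI conjI ballI)
            show "nat x \<in> {1..N}" using x by auto
            fix t assume t: "t \<in> {1..<r+1}"
            then have "int K < (x - int (js!(t-1))) mod int N" using x by auto
            then show "(int (nat x) - int (js ! (t - 1))) mod int N \<notin> {0..int K}" using x by auto
          qed
          moreover have "x = int (nat x)" using x by auto
          ultimately show "x \<in> int ` missed N K (r+1) js" by blast
        qed
      qed
      moreover have "card (int ` missed N K (r+1) js) = card (missed N K (r+1) js)"
        by (simp add: card_image)
      ultimately show ?thesis using js unfolding A_def M_def by simp
    qed
    have offs: "aa js t = (\<Sum>s\<in>{s\<in>{0..<r}. aa js s < aa js t}. gg js s)" if js: "js \<in> A" and t: "t < r" for js t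
    proof -
      interpret G: gaps "int N" "{0..<r}" "\<lambda>t. int (js!t)" using loc[OF js] .
      show ?thesis unfolding aa_def gg_def using G.offs[of 0 t] t r2 by simp
    qed
    have inj: "inj_on F A"
    proof (rule inj_onI)
      fix js js' assume js: "js \<in> A" and js': "js' \<in> A" and FF: "F js = F js'"
      have h0: "js!0 = js'!0" using FF unfolding F_def by simp
      have hR: "{(s,t). s<r \<and> t<r \<and> aa js s < aa js t} = {(s,t). s<r \<and> t<r \<and> aa js' s < aa js' t}"
        using FF unfolding F_def by simp
      have hg: "restrict (\<lambda>t. gg js t - int (K+1)) {0..<r} = restrict (\<lambda>t. gg js' t - int (K+1)) {0..<r}"
        using FF unfolding F_def by simp
      have hg': "gg js s = gg js' s" if "s < r" for s
      proof -
        have "restrict (\<lambda>t. gg js t - int (K+1)) {0..<r} s = restrict (\<lambda>t. gg js' t - int (K+1)) {0..<r} s"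
          using hg by simp
        then show ?thesis using that by simp
      qed
      have ha: "aa js t = aa js' t" if t: "t < r" for t
      proof -
        have S: "{s\<in>{0..<r}. aa js s < aa js t} = {s\<in>{0..<r}. aa js' s < aa js' t}"
        proof -
          have "\<And>s. s < r \<Longrightarrow> (aa js s < aa js t) = (aa js' s < aa js' t)"
          proof -
            fix s assume s: "s < r"
            have "((s,t) \<in> {(s,t). s<r \<and> t<r \<and> aa js s < aa js t}) = ((s,t) \<in> {(s,t). s<r \<and> t<r \<and> aa js' s < aa js' t})"
              using hR by simp
            then show "(aa js s < aa js t) = (aa js' s < aa js' t)" using s t by simp
          qed
          then show ?thesis by auto
        qed
        have "aa js t = (\<Sum>s\<in>{s\<in>{0..<r}. aa js s < aa js t}. gg js s)" using offs[OF js t] .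
        also have "\<dots> = (\<Sum>s\<in>{s\<in>{0..<r}. aa js' s < aa js' t}. gg js' s)"
          unfolding S using hg' by (intro sum.cong) auto
        also have "\<dots> = aa js' t" using offs[OF js' t] by simp
        finally show ?thesis .
      qed
      show "js = js'"
      proof (rule nth_equalityI)
        show "length js = length js'" using js js' unfolding A_def by simp
        fix t assume "t < length js"
        then have t: "t < r" using js unfolding A_def by simp
        have "(int (js!t) - int (js!0)) mod int N = (int (js'!t) - int (js!0)) mod int N"
          using ha[OF t] h0 unfolding aa_def by simp
        then have "int (js!t) mod int N = int (js'!t) mod int N" by (rule mod_cancel_right)
        then have "int (js!t) = int (js'!t)"
          using eq_range rng[OF js t] rng[OF js' t] by (metis of_nat_le_iff of_nat_1)
        then show "js!t = js'!t" by simp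
      qed
    qed
    have sub: "F ` A \<subseteq> {1..N} \<times> Pow ({0..<r} \<times> {0..<r}) \<times> Wc"
    proof
      fix x assume "x \<in> F ` A"
      then obtain js where js: "js \<in> A" and x: "x = F js" by blast
      interpret G: gaps "int N" "{0..<r}" "\<lambda>t. int (js!t)" using loc[OF js] .
      have a1: "js!0 \<in> {1..N}" using rng[OF js, of 0] r2 by simp
      have a2: "{(s,t). s<r \<and> t<r \<and> aa js s < aa js t} \<in> Pow ({0..<r} \<times> {0..<r})" by auto
      have s1: "(\<Sum>t\<in>{0..<r}. max (restrict (\<lambda>t. gg js t - int (K+1)) {0..<r} t) 0) = int \<iota>"
      proof -
        have "(\<Sum>t\<in>{0..<r}. max (restrict (\<lambda>t. gg js t - int (K+1)) {0..<r} t) 0)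
            = (\<Sum>t\<in>{0..<r}. max (gg js t - (int K + 1)) 0)" by (intro sum.cong) auto
        also have "\<dots> = int \<iota>" using G.card_miss[of "int K"] missc[OF js] unfolding gg_def by simp
        finally show ?thesis .
      qed
      have s2: "(\<Sum>t\<in>{0..<r}. restrict (\<lambda>t. gg js t - int (K+1)) {0..<r} t) = int N - int r * (int K + 1)"
      proof -
        have "(\<Sum>t\<in>{0..<r}. restrict (\<lambda>t. gg js t - int (K+1)) {0..<r} t)
            = (\<Sum>t\<in>{0..<r}. gg js t - (int K + 1))" by (intro sum.cong) auto
        also have "\<dots> = (\<Sum>t\<in>{0..<r}. gg js t) - int r * (int K + 1)" by (simp add: sum_subtractf)
        also have "(\<Sum>t\<in>{0..<r}. gg js t) = int N" using G.sum_g unfolding gg_def by simp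
        finally show ?thesis .
      qed
      have a3: "restrict (\<lambda>t. gg js t - int (K+1)) {0..<r} \<in> Wc" unfolding Wc_def using s1 s2 by auto
      show "x \<in> {1..N} \<times> Pow ({0..<r} \<times> {0..<r}) \<times> Wc" unfolding x F_def using a1 a2 a3 by blast
    qed
    define L where "L = nat (2 * int \<iota> - (int N - int r * (int K + 1)) + 1)"
    have NrKi: "int N \<le> int r * (int K + 1)" using NrK
      by (metis of_nat_1 of_nat_add of_nat_le_iff of_nat_mult)
    have cWW: "finite Wc \<and> card Wc \<le> r * r * L ^ (r - 2)" unfolding Wc_def L_def
      using NrKi io by (intro card_W) auto
    then have cW: "card Wc \<le> r * r * L ^ (r - 2)" and finW: "finite Wc" by auto
    have cA: "card A \<le> N * 2^(r*r) * (r * r * L ^ (r - 2))"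
    proof -
      have "card A \<le> card ({1..N} \<times> Pow ({0..<r} \<times> {0..<r}) \<times> Wc)"
        using card_inj_on_le[OF inj sub] finW by simp
      also have "\<dots> = N * 2^(r*r) * card Wc" by (simp add: card_cartesian_product card_Pow)
      also have "\<dots> \<le> N * 2^(r*r) * (r * r * L ^ (r - 2))" using cW by simp
      finally show ?thesis .
    qed
    define y where "y = real r - real N / real (K + 1)"
    have y0: "0 \<le> y"
    proof -
      have "real N \<le> real r * real (K+1)" using NrK by (metis of_nat_le_iff of_nat_mult)
      then have "real N / real (K+1) \<le> real r" by (simp add: divide_le_eq)
      then show ?thesis unfolding y_def by simp
    qed
    have yK: "real r * real (K+1) - real N = y * real (K+1)" unfolding y_def by (simp add: field_simps)
    have Lr: "real L = 2 * real \<iota> + (real r * real (K+1) - real N) + 1"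
    proof -
      have "0 \<le> 2 * int \<iota> - (int N - int r * (int K + 1)) + 1" using NrKi by simp
      then have "int L = 2 * int \<iota> - (int N - int r * (int K + 1)) + 1" unfolding L_def by simp
      then have "real_of_int (int L) = real_of_int (2 * int \<iota> - (int N - int r * (int K + 1)) + 1)" by simp
      then show ?thesis by simp
    qed
    have Lb: "real L \<le> 3 * (y * real K + real \<iota>)"
    proof -
      have "y * 1 \<le> y * real K" using y0 K1 by (intro mult_left_mono) auto
      then have "y * real (K+1) \<le> 2 * (y * real K)" by (simp add: algebra_simps)
      moreover have "0 \<le> y * real K" using y0 by simp
      moreover have "1 \<le> real \<iota>" using io by simp
      moreover have "real L = 2 * real \<iota> + y * real (K+1) + 1" using Lr yK by simp
      ultimately have "real L \<le> 3 * (y * real K) + 3 * real \<iota>"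
        by (smt (verit))
      then show ?thesis by (simp add: algebra_simps)
    qed
    have "real (card A) \<le> real N * 2^(r*r) * (real r * real r * real L ^ (r - 2))"
      using cA by (metis (mono_tags, lifting) of_nat_le_iff of_nat_mult of_nat_power of_nat_numeral)
    also have "\<dots> \<le> real N * 2^(r*r) * (real r * real r * (3 * (y * real K + real \<iota>)) ^ (r - 2))"
      using Lb by (intro mult_left_mono power_mono) auto
    also have "\<dots> = real N * 2^(r*r) * (real r * real r * (3 ^ (r - 2) * (y * real K + real \<iota>) ^ (r - 2)))"
      by (simp only: power_mult_distrib)
    also have "\<dots> = C * real N * (y * real K + real \<iota>) ^ (r - 2)"
      unfolding C_def by (simp add: mult_ac)
    finally show "real (card {js :: nat list. length js = r \<and> distinct js \<and> set js \<subseteq> {1..N}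
                  \<and> M N K (r + 1) js = \<iota>})
      \<le> C * real N * ((real r - real N / real (K + 1)) * real K + real \<iota>) ^ (r - 2)"
      unfolding A_def y_def .
  qed
qed

end
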